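(* Fix an observation sequence $\{s_t,a_t\}_{t\in\mathbb Z}$, integers $t_1\le t_2$, $\mathbb I=[t_1:t_2]$, and $\theta,\hat\theta\in\Theta$ (possibly equal). Let $\{\varphi^\theta_t\}_{t\in\mathbb I},\{\hat\varphi^{\hat\theta}_t\}_{t\in\mathbb I},\{\rho^\theta_t\}_{t\in\mathbb I},\{\hat\rho^{\hat\theta}_t\}_{t\in\mathbb I}$ be strictly positive probability measures on $\mathcal O\times\{0,1\}$ such that $F^\theta_t\varphi^\theta_{t-1}=\varphi^\theta_t$ and $F^{\hat\theta}_t\hat\varphi^{\hat\theta}_{t-1}=\hat\varphi^{\hat\theta}_t$ for $t\in\mathbb I$, $t\ne t_1$, and $B^\theta_t\rho^\theta_{t+1}=\rho^\theta_t$ and $B^{\hat\theta}_t\hat\rho^{\hat\theta}_{t+1}=\hat\rho^{\hat\theta}_t$ for $t\in\mathbb I$, $t\ne t_2$. Then $$\big\|(\varphi^\theta\otimes\rho^\theta)_{t_2}-(\hat\varphi^{\hat\theta}\otimes\rho^\theta)_{t_2}\big\|_{TV}\le\Big(1-\frac{\epsilon_b^2\zeta}{|\mathcal O|}\Big)^{t_2-t_1}+\frac{|\mathcal O|\,z_{\theta,\hat\theta}\,L_{\theta,\|\hat\theta-\theta\|_2}}{\epsilon_b^2\zeta}\|\hat\theta-\theta\|_2,$$ $$\big\|(\hat\varphi^{\hat\theta}\otimes\rho^\theta)_{t_1}-(\hat\varphi^{\hat\theta}\otimes\hat\rho^{\hat\theta})_{t_1}\big\|_{TV}\le\Big(1-\frac{\epsilon_b^2\zeta}{|\mathcal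 O|}\Big)^{t_2-t_1}+\frac{|\mathcal O|\,z_{\theta,\hat\theta}\,L_{\theta,\|\hat\theta-\theta\|_2}}{\epsilon_b^2\zeta}\|\hat\theta-\theta\|_2.$$
   Context: $\mathcal S,\mathcal A,\mathcal O$ are finite sets; $\Theta=\Theta_{hi}\times\Theta_{lo}\times\Theta_b$ is a convex compact subset of a Euclidean space. There are policies $\pi_{hi}(o\mid s;\theta_{hi})$ (distribution on $\mathcal O$), $\pi_{lo}(a\mid s,o;\theta_{lo})$ (distribution on $\mathcal A$), $\pi_b(b\mid s,o';\theta_b)$ (distribution on $\{0,1\}$); standing assumption: on an open set $\tilde\Theta\supseteq\Theta$ they are defined, strictly positive and continuously differentiable in $\theta$. For fixed $\zeta\in(0,1)$, $\bar\pi_{hi}(o_t\mid s_t,o_{t-1},b_t;\theta_{hi})$ equals $\pi_{hi}(o_t\mid s_t;\theta_{hi})$ if $b_t=1$, $1-\zeta+\zeta/|\mathcal O|$ if $b_t=0,o_t=o_{t-1}$, $\zeta/|\mathcal O|$ if $b_t=0,o_t\ne o_{t-1}$. Let $\epsilon_b>0$ be a constant for which there is a conditional distribution $\bar\pi_{o,b}(o_t,b_t\mid s_t;\theta)$ on $\mathcal O\times\{0,1\}$ with $0<\epsilon_b\zeta\bar\pi_{o,b}(o_t,b_t\mid s_t;\theta)\le\pi_b(b_t\mid s_t,o_{t-1};\theta_b)\bar\pi_{hi}(o_t\mid s_t,o_{t-1},b_t;\theta_{hi})\le\epsilon_b^{-1}|\mathcal O|\bar\pi_{o,b}(o_t,b_t\mid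 s_t;\theta)$ for all $\theta\in\Theta$ and all arguments (such $\epsilon_b$ exists). Define $h(\theta;o_{t-1},s_t,a_t,o_t,b_t)=\pi_b(b_t\mid s_t,o_{t-1};\theta_b)\bar\pi_{hi}(o_t\mid s_t,o_{t-1},b_t;\theta_{hi})\pi_{lo}(a_t\mid s_t,o_t;\theta_{lo})$. For $\theta\in\Theta,\delta>0$, $L_{\theta,\delta}$ is the smallest $L$ such that for all arguments, $\tilde\theta\mapsto h(\tilde\theta;\cdot)$ is $L$-Lipschitz on $\{\tilde\theta\in\Theta:\|\tilde\theta-\theta\|_2\le\delta\}$. Let $z_{\theta,\hat\theta}=\max_{s',a'}\frac{[\max_{o_{t-1},o_t,b_t}h(\theta;o_{t-1},s',a',o_t,b_t)]\vee[\max_{o_{t-1},o_t,b_t}h(\hat\theta;o_{t-1},s',a',o_t,b_t)]}{[\min_{o_{t-1},o_t,b_t}h(\theta;o_{t-1},s',a',o_t,b_t)][\min_{o_{t-1},o_t,b_t}h(\hat\theta;o_{t-1},s',a',o_t,b_t)]}$. Given the observation sequence, for probability measures $\varphi,\rho$ on $\mathcal O\times\{0,1\}$: the forward operator $F^\theta_t\varphi(o_t,b_t)\propto\sum_{o_{t-1},b_{t-1}}h(\theta;o_{t-1},s_t,a_t,o_t,b_t)\varphi(o_{t-1},b_{t-1})$ and backward operator $B^\theta_t\rho(o_t,b_t)\propto\sum_{o_{t+1},b_{t+1}}h(\theta;o_t,s_{t+1},a_{t+1},o_{t+1},b_{t+1})\rho(o_{t+1},b_{t+1})$ (both normalized to probability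 measures). For families $\varphi,\rho$, $(\varphi\otimes\rho)_t(o_t,b_t)\propto\varphi_t(o_t,b_t)\rho_t(o_t,b_t)$ (normalized). $\|\nu_1-\nu_2\|_{TV}=\frac12\sum|\nu_1-\nu_2|$. *)

theory Defs
  imports "HOL-Analysis.Analysis"
begin

text \<open>Parameters theta = (theta_hi, theta_lo, theta_b) live in a product of Euclidean
  spaces; the norm on the product type is the Euclidean 2-norm.  The termination
  variable b in {0,1} is modelled by bool (True = 1).\<close>

type_synonym ('h,'l,'b) param = "'h \<times> 'l \<times> 'b"

text \<open>Policies: pihi o s th_hi = pi_hi(o|s), pilo a s o th_lo = pi_lo(a|s,o),
  pib b s o' th_b = pi_b(b|s,o').\<close>

definition pibar_hi ::
  "('o::finite \<Rightarrow> 's \<Rightarrow> 'h \<Rightarrow> real) \<Rightarrow> real \<Rightarrow> 'o \<Rightarrow> 's \<Rightarrow> 'o \<Rightarrow> bool \<Rightarrow> 'h \<Rightarrow> real" where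
  "pibar_hi pihi zeta ot st oprev bt th =
     (if bt then pihi ot st th
      else if ot = oprev then 1 - zeta + zeta / real CARD('o)
      else zeta / real CARD('o))"

definition hfun ::
  "('o::finite \<Rightarrow> 's \<Rightarrow> 'h \<Rightarrow> real) \<Rightarrow> ('a \<Rightarrow> 's \<Rightarrow> 'o \<Rightarrow> 'l \<Rightarrow> real) \<Rightarrow>
   (bool \<Rightarrow> 's \<Rightarrow> 'o \<Rightarrow> 'b \<Rightarrow> real) \<Rightarrow> real \<Rightarrow> ('h,'l,'b) param \<Rightarrow>
   'o \<Rightarrow> 's \<Rightarrow> 'a \<Rightarrow> 'o \<Rightarrow> bool \<Rightarrow> real" where
  "hfun pihi pilo pib zeta th oprev st ac ot bt =
     pib bt st oprev (snd (snd th)) * pibar_hi pihi zeta ot st oprev bt (fst th)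
     * pilo ac st ot (fst (snd th))"

definition C1_on :: "('p::euclidean_space) set \<Rightarrow> ('p \<Rightarrow> real) \<Rightarrow> bool" where
  "C1_on T f \<longleftrightarrow> (\<exists>D::'p \<Rightarrow> ('p \<Rightarrow>\<^sub>L real).
      (\<forall>x\<in>T. (f has_derivative blinfun_apply (D x)) (at x)) \<and> continuous_on T D)"

definition Lconst ::
  "('o::finite \<Rightarrow> 's::finite \<Rightarrow> 'h::euclidean_space \<Rightarrow> real) \<Rightarrow>
   ('a::finite \<Rightarrow> 's \<Rightarrow> 'o \<Rightarrow> 'l::euclidean_space \<Rightarrow> real) \<Rightarrow>
   (bool \<Rightarrow> 's \<Rightarrow> 'o \<Rightarrow> 'b::euclidean_space \<Rightarrow> real) \<Rightarrow> real \<Rightarrow>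
   ('h,'l,'b) param set \<Rightarrow> ('h,'l,'b) param \<Rightarrow> real \<Rightarrow> real" where
  "Lconst pihi pilo pib zeta Theta th delta =
     Inf {L. \<forall>oprev st ac ot bt.
        L-lipschitz_on {th'\<in>Theta. norm (th' - th) \<le> delta}
          (\<lambda>th'. hfun pihi pilo pib zeta th' oprev st ac ot bt)}"

definition hmax where
  "hmax pihi pilo pib zeta th st ac =
     Max (range (\<lambda>(oprev, ot, bt). hfun pihi pilo pib zeta th oprev st ac ot bt))"

definition hmin where
  "hmin pihi pilo pib zeta th st ac =
     Min (range (\<lambda>(oprev, ot, bt). hfun pihi pilo pib zeta th oprev st ac ot bt))"

definition zconst ::
  "('o::finite \<Rightarrow> 's::finite \<Rightarrow> 'h \<Rightarrow> real) \<Rightarrow> ('a::finite \<Rightarrow> 's \<Rightarrow> 'o \<Rightarrow> 'l \<Rightarrow> real) \<Rightarrow>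
   (bool \<Rightarrow> 's \<Rightarrow> 'o \<Rightarrow> 'b \<Rightarrow> real) \<Rightarrow> real \<Rightarrow> ('h,'l,'b) param \<Rightarrow> ('h,'l,'b) param \<Rightarrow> real" where
  "zconst pihi pilo pib zeta th th' =
     Max (range (\<lambda>(st, ac).
       max (hmax pihi pilo pib zeta th st ac) (hmax pihi pilo pib zeta th' st ac)
       / (hmin pihi pilo pib zeta th st ac * hmin pihi pilo pib zeta th' st ac)))"

text \<open>Probability measures on O x {0,1} are functions to the reals.\<close>
definition normalize :: "('x::finite \<Rightarrow> real) \<Rightarrow> 'x \<Rightarrow> real" where
  "normalize f = (\<lambda>x. f x / (\<Sum>y\<in>UNIV. f y))"

definition is_prob :: "('x::finite \<Rightarrow> real) \<Rightarrow> bool" where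
  "is_prob f \<longleftrightarrow> (\<forall>x. 0 \<le> f x) \<and> (\<Sum>x\<in>UNIV. f x) = 1"

definition pos_prob :: "('x::finite \<Rightarrow> real) \<Rightarrow> bool" where
  "pos_prob f \<longleftrightarrow> (\<forall>x. 0 < f x) \<and> (\<Sum>x\<in>UNIV. f x) = 1"

definition fwd where
  "fwd pihi pilo pib zeta (s :: int \<Rightarrow> 's) (a :: int \<Rightarrow> 'a) th t
     (phi :: 'o::finite \<times> bool \<Rightarrow> real) =
     normalize (\<lambda>(ot, bt). \<Sum>(oprev, bprev)\<in>UNIV.
        hfun pihi pilo pib zeta th oprev (s t) (a t) ot bt * phi (oprev, bprev))"

definition bwd where
  "bwd pihi pilo pib zeta (s :: int \<Rightarrow> 's) (a :: int \<Rightarrow> 'a) th t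
     (rho :: 'o::finite \<times> bool \<Rightarrow> real) =
     normalize (\<lambda>(ot, bt). \<Sum>(onext, bnext)\<in>UNIV.
        hfun pihi pilo pib zeta th ot (s (t+1)) (a (t+1)) onext bnext * rho (onext, bnext))"

definition otimes :: "('x::finite \<Rightarrow> real) \<Rightarrow> ('x \<Rightarrow> real) \<Rightarrow> 'x \<Rightarrow> real" where
  "otimes phi rho = normalize (\<lambda>x. phi x * rho x)"

definition tv_dist :: "('x::finite \<Rightarrow> real) \<Rightarrow> ('x \<Rightarrow> real) \<Rightarrow> real" where
  "tv_dist nu1 nu2 = (1/2) * (\<Sum>x\<in>UNIV. \<bar>nu1 x - nu2 x\<bar>)"

end

theory Submission
  imports Defs "HOL-Analysis.Analysis"
begin

definition nxt :: "('x::finite \<Rightarrow> 'x \<Rightarrow> real) \<Rightarrow> ('x \<Rightarrow> real) \<Rightarrow> 'x \<Rightarrow> real" where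
  "nxt Q mu = normalize (\<lambda>x. \<Sum>y\<in>UNIV. mu y * Q y x)"

lemma sum_normalize: "sum f UNIV \<noteq> 0 \<Longrightarrow> sum (normalize f) UNIV = 1"
  unfolding normalize_def by (simp add: sum_divide_distrib[symmetric])

lemma normalize_scale: "(c::real) \<noteq> 0 \<Longrightarrow> normalize (\<lambda>x. c * f x) = normalize f"
  unfolding normalize_def by (auto simp: sum_distrib_left[symmetric])

lemma otimes_nxt:
  assumes "(\<Sum>x\<in>UNIV. \<Sum>y\<in>UNIV. mu y * Q y x) \<noteq> 0"
  shows "otimes (nxt Q mu) w = normalize (\<lambda>x. (\<Sum>y\<in>UNIV. mu y * Q y x) * w x)"
proof -
  let ?S = "(\<Sum>x\<in>UNIV. \<Sum>y\<in>UNIV. mu y * Q y x)"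
  have "(\<lambda>x. nxt Q mu x * w x) = (\<lambda>x. (1/?S) * ((\<Sum>y\<in>UNIV. mu y * Q y x) * w x))"
    by (simp add: nxt_def normalize_def)
  then have "otimes (nxt Q mu) w = normalize (\<lambda>x. (1/?S) * ((\<Sum>y\<in>UNIV. mu y * Q y x) * w x))"
    unfolding otimes_def by simp
  also have "\<dots> = normalize (\<lambda>x. (\<Sum>y\<in>UNIV. mu y * Q y x) * w x)"
    by (rule normalize_scale) (use assms in simp)
  finally show ?thesis .
qed

lemma tv_triangle: "tv_dist a c \<le> tv_dist a b + tv_dist b c"
proof -
  have "(\<Sum>x\<in>UNIV. \<bar>a x - c x\<bar>) \<le> (\<Sum>x\<in>UNIV. \<bar>a x - b x\<bar> + \<bar>b x - c x\<bar>)"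
    by (rule sum_mono) linarith
  then show ?thesis unfolding tv_dist_def by (simp add: sum.distrib)
qed

lemma tv_le1:
  assumes "\<forall>x. 0 \<le> a x" "\<forall>x. 0 \<le> b x" "sum a UNIV = 1" "sum b UNIV = 1"
  shows "tv_dist a b \<le> 1"
proof -
  have "(\<Sum>x\<in>UNIV. \<bar>a x - b x\<bar>) \<le> (\<Sum>x\<in>UNIV. a x + b x)"
  proof (rule sum_mono)
    fix x
    show "\<bar>a x - b x\<bar> \<le> a x + b x" using assms(1,2)[rule_format, of x] by linarith
  qed
  then show ?thesis unfolding tv_dist_def using assms by (simp add: sum.distrib)
qed

lemma tv_rel:
  fixes A A' :: "'x::finite \<Rightarrow> real"
  assumes A: "\<forall>x. 0 < A x" and A': "\<forall>x. 0 < A' x" and r: "\<forall>x. \<bar>A' x - A x\<bar> \<le> r * A x"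
  shows "tv_dist (normalize A) (normalize A') \<le> r"
proof -
  define S where "S = sum A UNIV"
  define S' where "S' = sum A' UNIV"
  have S: "S > 0" unfolding S_def using A by (simp add: sum_pos)
  have S': "S' > 0" unfolding S'_def using A' by (simp add: sum_pos)
  have e: "normalize A x - normalize A' x = (A x - A' x)/S + A' x*(S'-S)/(S*S')" for x
    using S S' unfolding normalize_def S_def[symmetric] S'_def[symmetric] by (simp add: field_simps)
  have "(\<Sum>x\<in>UNIV. \<bar>normalize A x - normalize A' x\<bar>) \<le> (\<Sum>x\<in>UNIV. \<bar>A x - A' x\<bar>/S + A' x*\<bar>S'-S\<bar>/(S*S'))"
  proof (rule sum_mono)
    fix x
    have "\<bar>(A x - A' x)/S + A' x*(S'-S)/(S*S')\<bar> \<le> \<bar>(A x - A' x)/S\<bar> + \<bar>A' x*(S'-S)/(S*S')\<bar>"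
      by (rule abs_triangle_ineq)
    also have "\<dots> = \<bar>A x - A' x\<bar>/S + A' x*\<bar>S'-S\<bar>/(S*S')"
      using S S' A' by (simp add: abs_mult abs_divide less_imp_le)
    finally show "\<bar>normalize A x - normalize A' x\<bar> \<le> \<bar>A x - A' x\<bar>/S + A' x*\<bar>S'-S\<bar>/(S*S')"
      using e by simp
  qed
  also have "\<dots> = (\<Sum>x\<in>UNIV. \<bar>A x - A' x\<bar>)/S + \<bar>S'-S\<bar>/S"
    using S S' by (simp add: sum.distrib sum_divide_distrib[symmetric] sum_distrib_right[symmetric] S'_def[symmetric])
  also have "\<dots> \<le> r + r"
  proof -
    have a: "(\<Sum>x\<in>UNIV. \<bar>A x - A' x\<bar>) \<le> r * S"
      unfolding S_def sum_distrib_left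
      by (rule sum_mono) (use r in \<open>simp add: abs_minus_commute\<close>)
    have "\<bar>S'-S\<bar> = \<bar>\<Sum>x\<in>UNIV. A' x - A x\<bar>" unfolding S_def S'_def by (simp add: sum_subtractf)
    also have "\<dots> \<le> (\<Sum>x\<in>UNIV. \<bar>A' x - A x\<bar>)" by (rule sum_abs)
    also have "\<dots> = (\<Sum>x\<in>UNIV. \<bar>A x - A' x\<bar>)" by (simp add: abs_minus_commute)
    finally have b: "\<bar>S'-S\<bar> \<le> r * S" using a by linarith
    have a': "(\<Sum>x\<in>UNIV. \<bar>A x - A' x\<bar>) / S \<le> r" using a S by (simp add: divide_le_eq)
    have b': "\<bar>S'-S\<bar> / S \<le> r" using b S by (simp add: divide_le_eq)
    show ?thesis using a' b' by linarith
  qed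
  finally show ?thesis unfolding tv_dist_def by simp
qed

lemma dobrushin:
  fixes mu nu lam :: "'x::finite \<Rightarrow> real" and K :: "'x \<Rightarrow> 'x \<Rightarrow> real"
  assumes mu: "sum mu UNIV = 1" and nu: "sum nu UNIV = 1"
    and K1: "\<forall>y. sum (K y) UNIV = 1" and Kl: "\<forall>y x. k * lam x \<le> K y x"
    and lam: "sum lam UNIV = 1"
  shows "tv_dist (\<lambda>x. \<Sum>y\<in>UNIV. mu y * K y x) (\<lambda>x. \<Sum>y\<in>UNIV. nu y * K y x) \<le> (1-k) * tv_dist mu nu"
proof -
  define d where "d y = mu y - nu y" for y
  have d0: "sum d UNIV = 0" unfolding d_def using mu nu by (simp add: sum_subtractf)
  have eq: "(\<Sum>y\<in>UNIV. mu y * K y x) - (\<Sum>y\<in>UNIV. nu y * K y x) = (\<Sum>y\<in>UNIV. d y * (K y x - k * lam x))" for x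
  proof -
    have "(\<Sum>y\<in>UNIV. d y * (K y x - k * lam x)) = (\<Sum>y\<in>UNIV. d y * K y x) - (\<Sum>y\<in>UNIV. d y) * (k * lam x)"
      by (simp add: right_diff_distrib sum_subtractf sum_distrib_right mult.assoc)
    also have "\<dots> = (\<Sum>y\<in>UNIV. d y * K y x)" using d0 by simp
    finally show ?thesis unfolding d_def by (simp add: algebra_simps sum_subtractf)
  qed
  have "(\<Sum>x\<in>UNIV. \<bar>(\<Sum>y\<in>UNIV. mu y * K y x) - (\<Sum>y\<in>UNIV. nu y * K y x)\<bar>)
      \<le> (\<Sum>x\<in>UNIV. \<Sum>y\<in>UNIV. \<bar>d y\<bar> * (K y x - k * lam x))"
  proof (rule sum_mono)
    fix x
    have "\<bar>\<Sum>y\<in>UNIV. d y * (K y x - k * lam x)\<bar> \<le> (\<Sum>y\<in>UNIV. \<bar>d y * (K y x - k * lam x)\<bar>)"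
      by (rule sum_abs)
    also have "\<dots> = (\<Sum>y\<in>UNIV. \<bar>d y\<bar> * (K y x - k * lam x))"
      using Kl by (intro sum.cong) (auto simp: abs_mult)
    finally show "\<bar>(\<Sum>y\<in>UNIV. mu y * K y x) - (\<Sum>y\<in>UNIV. nu y * K y x)\<bar> \<le> (\<Sum>y\<in>UNIV. \<bar>d y\<bar> * (K y x - k * lam x))"
      using eq by simp
  qed
  also have "\<dots> = (\<Sum>y\<in>UNIV. \<bar>d y\<bar> * (\<Sum>x\<in>UNIV. K y x - k * lam x))"
    by (subst sum.swap) (simp add: sum_distrib_left)
  also have "\<dots> = (\<Sum>y\<in>UNIV. \<bar>d y\<bar> * (1 - k))"
    using K1 lam by (simp add: sum_subtractf sum_distrib_left[symmetric])
  also have "\<dots> = (1-k) * (\<Sum>y\<in>UNIV. \<bar>mu y - nu y\<bar>)" unfolding d_def by (simp add: sum_distrib_left mult.commute)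
  finally have F: "(\<Sum>x\<in>UNIV. \<bar>(\<Sum>y\<in>UNIV. mu y * K y x) - (\<Sum>y\<in>UNIV. nu y * K y x)\<bar>) \<le> (1-k) * (\<Sum>y\<in>UNIV. \<bar>mu y - nu y\<bar>)" .
  then have "1/2 * (\<Sum>x\<in>UNIV. \<bar>(\<Sum>y\<in>UNIV. mu y * K y x) - (\<Sum>y\<in>UNIV. nu y * K y x)\<bar>) \<le> 1/2 * ((1-k) * (\<Sum>y\<in>UNIV. \<bar>mu y - nu y\<bar>))" by simp
  moreover have "(1-k) * (1/2 * (\<Sum>y\<in>UNIV. \<bar>mu y - nu y\<bar>)) = 1/2 * ((1-k) * (\<Sum>y\<in>UNIV. \<bar>mu y - nu y\<bar>))"
    by (simp only: mult.left_commute)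
  ultimately show ?thesis unfolding tv_dist_def by simp
qed

lemma sum_pos_univ: "(\<forall>x. 0 < f x) \<Longrightarrow> 0 < sum (f::'x::finite \<Rightarrow> real) UNIV"
  by (rule sum_pos) auto

lemma otimes_prob:
  assumes "\<forall>x. 0 < f x" "\<forall>x. 0 < w x"
  shows "(\<forall>x. 0 \<le> otimes f w x) \<and> sum (otimes f w) UNIV = 1"
proof -
  have "0 < sum (\<lambda>x. f x * w x) UNIV" using assms by (intro sum_pos_univ) auto
  then show ?thesis unfolding otimes_def using sum_normalize[of "\<lambda>x. f x * w x"] assms
    by (auto simp: normalize_def less_imp_le)
qed

lemma contr:
  fixes Q :: "'x::finite \<Rightarrow> 'x \<Rightarrow> real" and mu nu w u v :: "'x \<Rightarrow> real"
  assumes mu: "\<forall>x. 0 < mu x" and nu: "\<forall>x. 0 < nu x" and w: "\<forall>x. 0 < w x"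
    and c1: "0 < c1" and u: "\<forall>x. 0 < u x" and v: "\<forall>x. 0 < v x"
    and lo: "\<forall>y x. c1 * u y * v x \<le> Q y x" and hi: "\<forall>y x. Q y x \<le> c2 * u y * v x"
  shows "tv_dist (otimes (nxt Q mu) w) (otimes (nxt Q nu) w)
     \<le> (1 - c1/c2) * tv_dist (otimes mu (\<lambda>y. \<Sum>x\<in>UNIV. Q y x * w x)) (otimes nu (\<lambda>y. \<Sum>x\<in>UNIV. Q y x * w x))"
proof -
  define w' where "w' = (\<lambda>y. \<Sum>x\<in>UNIV. Q y x * w x)"
  have Qp: "Q y x > 0" for y x
  proof -
    have "0 < c1 * u y * v x" using c1 u v by simp
    then show ?thesis using lo[rule_format, of y x] by linarith
  qed
  have w'p: "w' y > 0" for y unfolding w'_def using Qp w by (intro sum_pos_univ) auto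
  have w'n: "w' y \<noteq> 0" for y using w'p[of y] by simp
  obtain y0 x0 :: 'x where True by simp
  have c2: "c2 > 0"
  proof -
    have "0 < Q y0 x0" by (rule Qp)
    also have "\<dots> \<le> c2 * (u y0 * v x0)" using hi by (simp add: mult.assoc)
    finally have "0 < c2 * (u y0 * v x0)" .
    moreover have "0 < u y0 * v x0" using u v by simp
    ultimately show ?thesis by (metis zero_less_mult_pos2)
  qed
  define K where "K y x = Q y x * w x / w' y" for y x
  define V where "V = (\<Sum>x\<in>UNIV. v x * w x)"
  define lam where "lam x = v x * w x / V" for x
  have Vp: "V > 0" unfolding V_def using v w by (intro sum_pos_univ) auto
  have K1: "\<forall>y. sum (K y) UNIV = 1"
  proof
    fix y
    have "sum (K y) UNIV = w' y / w' y" unfolding K_def w'_def by (simp add: sum_divide_distrib[symmetric])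
    then show "sum (K y) UNIV = 1" using w'p[of y] by simp
  qed
  have lam1: "sum lam UNIV = 1" unfolding lam_def using Vp by (simp add: sum_divide_distrib[symmetric] V_def[symmetric])
  have Kl: "\<forall>y x. (c1/c2) * lam x \<le> K y x"
  proof (intro allI)
    fix y x
    have w'le: "w' y \<le> c2 * u y * V"
    proof -
      have "w' y \<le> (\<Sum>x\<in>UNIV. c2 * u y * v x * w x)"
        unfolding w'_def
      proof (rule sum_mono)
        fix x
        show "Q y x * w x \<le> c2 * u y * v x * w x"
          using hi[rule_format, of y x] w[rule_format, of x] by (intro mult_right_mono) auto
      qed
      also have "\<dots> = c2 * u y * V" unfolding V_def by (simp add: sum_distrib_left mult.assoc)
      finally show ?thesis .
    qed
    have "(c1/c2) * lam x = c1 * u y * v x * w x / (c2 * u y * V)"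
      using u[rule_format, of y] c2 Vp unfolding lam_def by (simp add: field_simps)
    also have "\<dots> \<le> c1 * u y * v x * w x / w' y"
    proof (rule divide_left_mono)
      show "w' y \<le> c2 * u y * V" by (rule w'le)
      have "0 < u y" "0 < v x" "0 < w x" using u v w by auto
      then show "0 \<le> c1 * u y * v x * w x" using c1 by simp
      have "0 < c2 * u y * V" using \<open>0 < u y\<close> c2 Vp by simp
      then show "0 < c2 * u y * V * w' y" using w'p[of y] by simp
    qed
    also have "\<dots> \<le> Q y x * w x / w' y"
      using lo[rule_format, of y x] w[rule_format, of x] w'p[of y]
      by (intro divide_right_mono mult_right_mono) auto
    finally show "(c1/c2) * lam x \<le> K y x" unfolding K_def .
  qed
  have key: "otimes (nxt Q m) w = (\<lambda>x. \<Sum>y\<in>UNIV. otimes m w' y * K y x)" if m: "\<forall>x. 0 < m x" for m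
  proof
    fix x
    have S: "(\<Sum>x\<in>UNIV. \<Sum>y\<in>UNIV. m y * Q y x) \<noteq> 0"
      using m Qp by (intro less_imp_neq[symmetric] sum_pos_univ allI) auto
    have "(\<Sum>y\<in>UNIV. m y * w' y) = (\<Sum>y\<in>UNIV. \<Sum>x\<in>UNIV. m y * Q y x * w x)"
      unfolding w'_def by (simp add: sum_distrib_left mult.assoc)
    also have "\<dots> = (\<Sum>x\<in>UNIV. \<Sum>y\<in>UNIV. m y * Q y x * w x)" by (rule sum.swap)
    also have "\<dots> = (\<Sum>x\<in>UNIV. (\<Sum>y\<in>UNIV. m y * Q y x) * w x)" by (simp add: sum_distrib_right)
    finally have M: "(\<Sum>y\<in>UNIV. m y * w' y) = (\<Sum>x\<in>UNIV. (\<Sum>y\<in>UNIV. m y * Q y x) * w x)" .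
    have "(\<Sum>y\<in>UNIV. otimes m w' y * K y x) = (\<Sum>y\<in>UNIV. m y * Q y x * w x / (\<Sum>y\<in>UNIV. m y * w' y))"
      unfolding otimes_def normalize_def K_def
      proof (intro sum.cong refl)
        fix y
        show "m y * w' y / (\<Sum>y\<in>UNIV. m y * w' y) * (Q y x * w x / w' y) = m y * Q y x * w x / (\<Sum>y\<in>UNIV. m y * w' y)"
          using w'p[of y] by (simp add: field_simps)
      qed
    also have "\<dots> = (\<Sum>y\<in>UNIV. m y * Q y x) * w x / (\<Sum>y\<in>UNIV. m y * w' y)"
      by (simp add: sum_divide_distrib[symmetric] sum_distrib_right)
    finally show "otimes (nxt Q m) w x = (\<Sum>y\<in>UNIV. otimes m w' y * K y x)"
      unfolding otimes_nxt[OF S] using M by (simp add: normalize_def)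
  qed
  have pm: "sum (otimes mu w') UNIV = 1" "sum (otimes nu w') UNIV = 1"
    using otimes_prob[OF mu, of w'] otimes_prob[OF nu, of w'] w'p by auto
  show ?thesis
    unfolding w'_def[symmetric] key[OF mu] key[OF nu]
    by (rule dobrushin[OF pm K1 Kl lam1])
qed

lemma pert:
  fixes Q Q' :: "'x::finite \<Rightarrow> 'x \<Rightarrow> real" and mu w :: "'x \<Rightarrow> real"
  assumes mu: "\<forall>x. 0 < mu x" and w: "\<forall>x. 0 < w x" and Q: "\<forall>y x. 0 < Q y x" and Q': "\<forall>y x. 0 < Q' y x"
    and r: "\<forall>y x. \<bar>Q' y x - Q y x\<bar> \<le> r * Q y x"
  shows "tv_dist (otimes (nxt Q mu) w) (otimes (nxt Q' mu) w) \<le> r"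
proof -
  have S: "(\<Sum>x\<in>UNIV. \<Sum>y\<in>UNIV. mu y * Q y x) \<noteq> 0"
    using mu Q by (intro less_imp_neq[symmetric] sum_pos_univ allI) auto
  have S': "(\<Sum>x\<in>UNIV. \<Sum>y\<in>UNIV. mu y * Q' y x) \<noteq> 0"
    using mu Q' by (intro less_imp_neq[symmetric] sum_pos_univ allI) auto
  show ?thesis unfolding otimes_nxt[OF S] otimes_nxt[OF S']
  proof (rule tv_rel; intro allI)
    fix x
    show "0 < (\<Sum>y\<in>UNIV. mu y * Q y x) * w x" using mu Q w by (intro mult_pos_pos sum_pos_univ allI) auto
    show "0 < (\<Sum>y\<in>UNIV. mu y * Q' y x) * w x" using mu Q' w by (intro mult_pos_pos sum_pos_univ allI) auto
    have "\<bar>(\<Sum>y\<in>UNIV. mu y * Q' y x) * w x - (\<Sum>y\<in>UNIV. mu y * Q y x) * w x\<bar>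
        = \<bar>\<Sum>y\<in>UNIV. mu y * (Q' y x - Q y x)\<bar> * w x"
    proof -
      have "(\<Sum>y\<in>UNIV. mu y * Q' y x) * w x - (\<Sum>y\<in>UNIV. mu y * Q y x) * w x = (\<Sum>y\<in>UNIV. mu y * (Q' y x - Q y x)) * w x"
        by (simp add: sum_subtractf right_diff_distrib left_diff_distrib)
      then show ?thesis using w[rule_format, of x] by (simp add: abs_mult)
    qed
    also have "\<dots> \<le> (\<Sum>y\<in>UNIV. \<bar>mu y * (Q' y x - Q y x)\<bar>) * w x"
      by (rule mult_right_mono[OF sum_abs]) (use w in \<open>simp add: less_imp_le\<close>)
    also have "\<dots> \<le> (\<Sum>y\<in>UNIV. mu y * (r * Q y x)) * w x"
      by (intro mult_right_mono sum_mono) (use mu r w in \<open>auto simp: abs_mult less_imp_le intro: mult_left_mono\<close>)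
    also have "\<dots> = r * ((\<Sum>y\<in>UNIV. mu y * Q y x) * w x)" by (simp add: sum_distrib_left algebra_simps)
    finally show "\<bar>(\<Sum>y\<in>UNIV. mu y * Q' y x) * w x - (\<Sum>y\<in>UNIV. mu y * Q y x) * w x\<bar>
        \<le> r * ((\<Sum>y\<in>UNIV. mu y * Q y x) * w x)" .
  qed
qed

lemma chain:
  fixes Q Q' :: "nat \<Rightarrow> 'x::finite \<Rightarrow> 'x \<Rightarrow> real" and p p' u v :: "nat \<Rightarrow> 'x \<Rightarrow> real"
  assumes pp: "\<forall>j\<le>N. \<forall>x. 0 < p j x" and pp': "\<forall>j\<le>N. \<forall>x. 0 < p' j x"
    and pstep: "\<forall>j. 1 \<le> j \<and> j \<le> N \<longrightarrow> p j = nxt (Q j) (p (j-1))"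
    and pstep': "\<forall>j. 1 \<le> j \<and> j \<le> N \<longrightarrow> p' j = nxt (Q' j) (p' (j-1))"
    and c1: "0 < c1" and c12: "c1 \<le> c2"
    and uv: "\<forall>j. 1 \<le> j \<and> j \<le> N \<longrightarrow> (\<forall>x. 0 < u j x) \<and> (\<forall>x. 0 < v j x)
        \<and> (\<forall>y x. c1 * u j y * v j x \<le> Q j y x) \<and> (\<forall>y x. Q j y x \<le> c2 * u j y * v j x)
        \<and> (\<forall>y x. 0 < Q' j y x) \<and> (\<forall>y x. \<bar>Q' j y x - Q j y x\<bar> \<le> r * Q j y x)"
  shows "n \<le> N \<Longrightarrow> \<forall>w. (\<forall>x. 0 < w x) \<longrightarrow>
     tv_dist (otimes (p n) w) (otimes (p' n) w) \<le> (1 - c1/c2)^n + r * (\<Sum>i<n. (1-c1/c2)^i)"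
proof (induction n)
  case 0
  show ?case
  proof (intro allI impI)
    fix w :: "'x \<Rightarrow> real" assume w: "\<forall>x. 0 < w x"
    have "tv_dist (otimes (p 0) w) (otimes (p' 0) w) \<le> 1"
      using otimes_prob[of "p 0" w] otimes_prob[of "p' 0" w] pp pp' w by (intro tv_le1) auto
    then show "tv_dist (otimes (p 0) w) (otimes (p' 0) w) \<le> (1 - c1/c2)^0 + r * (\<Sum>i<0. (1-c1/c2)^i)" by simp
  qed
next
  case (Suc n)
  define d where "d = 1 - c1/c2"
  have c2: "0 < c2" using c1 c12 by simp
  have d0: "0 \<le> d" unfolding d_def using c12 c2 by simp
  have IH: "\<forall>w. (\<forall>x. 0 < w x) \<longrightarrow> tv_dist (otimes (p n) w) (otimes (p' n) w) \<le> d^n + r * (\<Sum>i<n. d^i)"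
    using Suc unfolding d_def by simp
  have j: "1 \<le> Suc n \<and> Suc n \<le> N" using Suc by simp
  note U = uv[rule_format, OF j]
  have Qp: "\<forall>y x. 0 < Q (Suc n) y x"
  proof (intro allI)
    fix y x
    have "0 < c1 * u (Suc n) y * v (Suc n) x" using c1 U by simp
    then show "0 < Q (Suc n) y x" using U by (meson less_le_trans)
  qed
  have pn: "\<forall>x. 0 < p n x" and pn': "\<forall>x. 0 < p' n x" using pp pp' Suc by auto
  show ?case
  proof (intro allI impI)
    fix w :: "'x \<Rightarrow> real" assume w: "\<forall>x. 0 < w x"
    define w' where "w' = (\<lambda>y. \<Sum>x\<in>UNIV. Q (Suc n) y x * w x)"
    have w'p: "\<forall>x. 0 < w' x" unfolding w'_def using Qp w by (intro allI sum_pos_univ) auto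
    have "tv_dist (otimes (p (Suc n)) w) (otimes (p' (Suc n)) w)
       = tv_dist (otimes (nxt (Q (Suc n)) (p n)) w) (otimes (nxt (Q' (Suc n)) (p' n)) w)"
      using pstep pstep' j by simp
    also have "\<dots> \<le> tv_dist (otimes (nxt (Q (Suc n)) (p n)) w) (otimes (nxt (Q (Suc n)) (p' n)) w)
        + tv_dist (otimes (nxt (Q (Suc n)) (p' n)) w) (otimes (nxt (Q' (Suc n)) (p' n)) w)"
      by (rule tv_triangle)
    also have "\<dots> \<le> d * tv_dist (otimes (p n) w') (otimes (p' n) w') + r"
    proof (rule add_mono)
      show "tv_dist (otimes (nxt (Q (Suc n)) (p n)) w) (otimes (nxt (Q (Suc n)) (p' n)) w)
          \<le> d * tv_dist (otimes (p n) w') (otimes (p' n) w')"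
        unfolding d_def w'_def by (rule contr[where u="u (Suc n)" and v="v (Suc n)", OF pn pn' w c1]) (use U in auto)
      show "tv_dist (otimes (nxt (Q (Suc n)) (p' n)) w) (otimes (nxt (Q' (Suc n)) (p' n)) w) \<le> r"
        by (rule pert[OF pn' w Qp]) (use U in auto)
    qed
    also have "\<dots> \<le> d * (d^n + r * (\<Sum>i<n. d^i)) + r"
      using IH w'p d0 by (intro add_mono mult_left_mono) auto
    also have "\<dots> = d^Suc n + r * (\<Sum>i<Suc n. d^i)"
      by (simp add: sum.lessThan_Suc_shift sum_distrib_left algebra_simps del: sum.lessThan_Suc)
    finally show "tv_dist (otimes (p (Suc n)) w) (otimes (p' (Suc n)) w) \<le> (1 - c1/c2)^Suc n + r * (\<Sum>i<Suc n. (1-c1/c2)^i)"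
      unfolding d_def .
  qed
qed

lemma chain_final:
  fixes Q Q' :: "nat \<Rightarrow> 'x::finite \<Rightarrow> 'x \<Rightarrow> real" and p p' u v :: "nat \<Rightarrow> 'x \<Rightarrow> real"
  assumes pp: "\<forall>j\<le>N. \<forall>x. 0 < p j x" and pp': "\<forall>j\<le>N. \<forall>x. 0 < p' j x"
    and pstep: "\<forall>j. 1 \<le> j \<and> j \<le> N \<longrightarrow> p j = nxt (Q j) (p (j-1))"
    and pstep': "\<forall>j. 1 \<le> j \<and> j \<le> N \<longrightarrow> p' j = nxt (Q' j) (p' (j-1))"
    and c1: "0 < c1" and c12: "c1 \<le> c2" and r0: "0 \<le> r"
    and uv: "\<forall>j. 1 \<le> j \<and> j \<le> N \<longrightarrow> (\<forall>x. 0 < u j x) \<and> (\<forall>x. 0 < v j x)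
        \<and> (\<forall>y x. c1 * u j y * v j x \<le> Q j y x) \<and> (\<forall>y x. Q j y x \<le> c2 * u j y * v j x)
        \<and> (\<forall>y x. 0 < Q' j y x) \<and> (\<forall>y x. \<bar>Q' j y x - Q j y x\<bar> \<le> r * Q j y x)"
    and w: "\<forall>x. 0 < w x"
  shows "tv_dist (otimes (p N) w) (otimes (p' N) w) \<le> (1 - c1/c2)^N + r * (c2 / c1)"
proof -
  define d where "d = 1 - c1/c2"
  have c2: "0 < c2" using c1 c12 by simp
  have d0: "0 \<le> d" "d < 1" unfolding d_def using c12 c2 c1 by auto
  have "(\<Sum>i<N. d^i) = (1 - d^N) / (1 - d)" using d0 by (simp add: sum_gp_strict)
  also have "\<dots> \<le> 1 / (1 - d)" using d0 by (intro divide_right_mono) auto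
  also have "\<dots> = c2 / c1" unfolding d_def using c1 c2 by simp
  finally have g: "(\<Sum>i<N. d^i) \<le> c2 / c1" .
  have "tv_dist (otimes (p N) w) (otimes (p' N) w) \<le> d^N + r * (\<Sum>i<N. d^i)"
    using chain[OF pp pp' pstep pstep' c1 c12 uv, of N] w unfolding d_def by simp
  also have "\<dots> \<le> d^N + r * (c2/c1)" using g r0 by (intro add_left_mono mult_left_mono) auto
  finally show ?thesis unfolding d_def .
qed

lemma C1_lip_bdd:
  fixes f :: "'p::euclidean_space \<Rightarrow> real"
  assumes C: "C1_on T f" and T: "K \<subseteq> T" and K: "compact K" "convex K"
  shows "\<exists>L B. L-lipschitz_on K f \<and> 0 \<le> B \<and> (\<forall>x\<in>K. \<bar>f x\<bar> \<le> B)"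
proof -
  obtain D where D: "\<forall>x\<in>T. (f has_derivative blinfun_apply (D x)) (at x)" "continuous_on T D"
    using C unfolding C1_on_def by blast
  have "continuous_on K D" by (rule continuous_on_subset[OF D(2) T])
  then have "compact (D ` K)" using K(1) by (rule compact_continuous_image)
  then have "bounded (D ` K)" by (rule compact_imp_bounded)
  then have "\<exists>b. \<forall>y\<in>D ` K. norm y \<le> b" unfolding bounded_iff .
  then obtain B1 where B1: "\<forall>y\<in>D ` K. norm y \<le> B1" by (elim exE)
  define L where "L = max B1 0"
  have L0: "0 \<le> L" unfolding L_def by simp
  have dB: "onorm (blinfun_apply (D z)) \<le> L" if z: "z \<in> K" for z
  proof -
    have "onorm (blinfun_apply (D z)) = norm (D z)" by (simp add: norm_blinfun.rep_eq)
    also have "\<dots> \<le> B1" using B1 z by blast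
    also have "\<dots> \<le> L" unfolding L_def by simp
    finally show ?thesis .
  qed
  have dD: "(f has_derivative blinfun_apply (D z)) (at z within K)" if z: "z \<in> K" for z
  proof -
    have "z \<in> T" using z T by blast
    then have "(f has_derivative blinfun_apply (D z)) (at z)" using D(1) by blast
    then show ?thesis by (rule has_derivative_at_withinI)
  qed
  have nb: "norm (f x - f y) \<le> L * norm (x - y)" if x: "x \<in> K" and y: "y \<in> K" for x y
    using differentiable_bound[where S=K and f=f and f'="\<lambda>z. blinfun_apply (D z)" and B=L and x=x and y=y] K(2) dD dB x y
    by blast
  have lip: "L-lipschitz_on K f"
    unfolding lipschitz_on_def using L0 nb by (simp add: dist_norm)
  have "continuous_on K f" by (rule lipschitz_on_continuous_on[OF lip])
  then have "compact (f ` K)" using K(1) by (rule compact_continuous_image)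
  then have "bounded (f ` K)" by (rule compact_imp_bounded)
  then have "\<exists>b. \<forall>y\<in>f ` K. norm y \<le> b" unfolding bounded_iff .
  then obtain B2 where B2: "\<forall>y\<in>f ` K. norm y \<le> B2" by (elim exE)
  have "\<forall>x\<in>K. \<bar>f x\<bar> \<le> max B2 0" using B2 by fastforce
  then have "L-lipschitz_on K f \<and> 0 \<le> max B2 0 \<and> (\<forall>x\<in>K. \<bar>f x\<bar> \<le> max B2 0)" using lip by simp
  then show ?thesis by blast
qed

lemma lipb_mult:
  fixes f g :: "'p::metric_space \<Rightarrow> real"
  assumes "\<exists>L B. L-lipschitz_on K f \<and> 0 \<le> B \<and> (\<forall>x\<in>K. \<bar>f x\<bar> \<le> B)"
    and "\<exists>L B. L-lipschitz_on K g \<and> 0 \<le> B \<and> (\<forall>x\<in>K. \<bar>g x\<bar> \<le> B)"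
  shows "\<exists>L B. L-lipschitz_on K (\<lambda>x. f x * g x) \<and> 0 \<le> B \<and> (\<forall>x\<in>K. \<bar>f x * g x\<bar> \<le> B)"
proof -
  obtain L1 B1 where f: "L1-lipschitz_on K f" "0 \<le> B1" "\<forall>x\<in>K. \<bar>f x\<bar> \<le> B1" using assms(1) by blast
  obtain L2 B2 where g: "L2-lipschitz_on K g" "0 \<le> B2" "\<forall>x\<in>K. \<bar>g x\<bar> \<le> B2" using assms(2) by blast
  have L1: "0 \<le> L1" using f(1) by (rule lipschitz_on_nonneg)
  have L2: "0 \<le> L2" using g(1) by (rule lipschitz_on_nonneg)
  have nb: "dist (f x * g x) (f y * g y) \<le> (B1*L2 + B2*L1) * dist x y" if x: "x \<in> K" and y: "y \<in> K" for x y
  proof -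
    have df: "\<bar>f x - f y\<bar> \<le> L1 * dist x y" using lipschitz_onD[OF f(1) x y] by (simp add: dist_real_def)
    have dg: "\<bar>g x - g y\<bar> \<le> L2 * dist x y" using lipschitz_onD[OF g(1) x y] by (simp add: dist_real_def)
    have "f x * g x - f y * g y = f x * (g x - g y) + g y * (f x - f y)" by (simp add: algebra_simps)
    then have "\<bar>f x * g x - f y * g y\<bar> \<le> \<bar>f x\<bar> * \<bar>g x - g y\<bar> + \<bar>g y\<bar> * \<bar>f x - f y\<bar>"
      using abs_triangle_ineq[of "f x * (g x - g y)" "g y * (f x - f y)"] by (simp add: abs_mult)
    also have "\<dots> \<le> B1 * (L2 * dist x y) + B2 * (L1 * dist x y)"
      using f g x y df dg by (intro add_mono mult_mono) auto
    finally show ?thesis by (simp add: dist_real_def algebra_simps)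
  qed
  have lip: "(B1*L2 + B2*L1)-lipschitz_on K (\<lambda>x. f x * g x)"
    unfolding lipschitz_on_def using nb f g L1 L2 by simp
  have "\<forall>x\<in>K. \<bar>f x * g x\<bar> \<le> B1 * B2"
  proof
    fix x assume x: "x \<in> K"
    have "\<bar>f x\<bar> * \<bar>g x\<bar> \<le> B1 * B2" using f g x by (intro mult_mono) auto
    then show "\<bar>f x * g x\<bar> \<le> B1 * B2" by (simp add: abs_mult)
  qed
  then have "(B1*L2 + B2*L1)-lipschitz_on K (\<lambda>x. f x * g x) \<and> 0 \<le> B1*B2 \<and> (\<forall>x\<in>K. \<bar>f x * g x\<bar> \<le> B1*B2)"
    using lip f g by simp
  then show ?thesis by blast
qed

lemma h_lip:
  fixes pihi :: "'o::finite \<Rightarrow> 's::finite \<Rightarrow> 'h::euclidean_space \<Rightarrow> real"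
    and pilo :: "'a::finite \<Rightarrow> 's \<Rightarrow> 'o \<Rightarrow> 'l::euclidean_space \<Rightarrow> real"
    and pib :: "bool \<Rightarrow> 's \<Rightarrow> 'o \<Rightarrow> 'b::euclidean_space \<Rightarrow> real"
    and Theta :: "('h,'l,'b) param set"
  assumes T: "Theta \<subseteq> T" "compact Theta" "convex Theta"
    and C1h: "\<forall>ov st. C1_on T (\<lambda>p. pihi ov st (fst p))"
    and C1l: "\<forall>ac st ov. C1_on T (\<lambda>p. pilo ac st ov (fst (snd p)))"
    and C1b: "\<forall>bt st ov. C1_on T (\<lambda>p. pib bt st ov (snd (snd p)))"
  shows "\<exists>L. \<forall>oprev st ac ot bt. L-lipschitz_on Theta (\<lambda>p. hfun pihi pilo pib zeta p oprev st ac ot bt)"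
proof -
  have each: "\<forall>oprev st ac ot bt. \<exists>L. L-lipschitz_on Theta (\<lambda>p. hfun pihi pilo pib zeta p oprev st ac ot bt)"
  proof (intro allI)
    fix oprev st ac ot bt
    have f1: "\<exists>L B. L-lipschitz_on Theta (\<lambda>p. pib bt st oprev (snd (snd p))) \<and> 0 \<le> B \<and> (\<forall>x\<in>Theta. \<bar>pib bt st oprev (snd (snd x))\<bar> \<le> B)"
      using C1b T by (intro C1_lip_bdd) auto
    have f3: "\<exists>L B. L-lipschitz_on Theta (\<lambda>p. pilo ac st ot (fst (snd p))) \<and> 0 \<le> B \<and> (\<forall>x\<in>Theta. \<bar>pilo ac st ot (fst (snd x))\<bar> \<le> B)"
      using C1l T by (intro C1_lip_bdd) auto
    have f2: "\<exists>L B. L-lipschitz_on Theta (\<lambda>p. pibar_hi pihi zeta ot st oprev bt (fst p)) \<and> 0 \<le> B \<and> (\<forall>x\<in>Theta. \<bar>pibar_hi pihi zeta ot st oprev bt (fst x)\<bar> \<le> B)"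
    proof (cases bt)
      case True
      then have e: "(\<lambda>p. pibar_hi pihi zeta ot st oprev bt (fst p)) = (\<lambda>p. pihi ot st (fst p))"
        by (simp add: pibar_hi_def)
      have "\<exists>L B. L-lipschitz_on Theta (\<lambda>p. pihi ot st (fst p)) \<and> 0 \<le> B \<and> (\<forall>x\<in>Theta. \<bar>pihi ot st (fst x)\<bar> \<le> B)"
        using C1h T by (intro C1_lip_bdd) auto
      then show ?thesis using True by (simp add: pibar_hi_def)
    next
      case False
      define c where "c = (if ot = oprev then 1 - zeta + zeta / real CARD('o) else zeta / real CARD('o))"
      have e: "(\<lambda>p. pibar_hi pihi zeta ot st oprev bt (fst p)) = (\<lambda>p. c)"
        using False by (simp add: pibar_hi_def c_def)
      have "0-lipschitz_on Theta (\<lambda>p::('h,'l,'b) param. c)" by (rule lipschitz_on_constant)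
      then have "0-lipschitz_on Theta (\<lambda>p. pibar_hi pihi zeta ot st oprev bt (fst p)) \<and> 0 \<le> \<bar>c\<bar> \<and> (\<forall>x\<in>Theta. \<bar>pibar_hi pihi zeta ot st oprev bt (fst x)\<bar> \<le> \<bar>c\<bar>)"
        using e False by (simp add: pibar_hi_def c_def)
      then show ?thesis by blast
    qed
    have "\<exists>L B. L-lipschitz_on Theta (\<lambda>p. pib bt st oprev (snd (snd p)) * pibar_hi pihi zeta ot st oprev bt (fst p)) \<and> 0 \<le> B
        \<and> (\<forall>x\<in>Theta. \<bar>pib bt st oprev (snd (snd x)) * pibar_hi pihi zeta ot st oprev bt (fst x)\<bar> \<le> B)"
      by (rule lipb_mult[OF f1 f2])
    then have "\<exists>L B. L-lipschitz_on Theta (\<lambda>p. pib bt st oprev (snd (snd p)) * pibar_hi pihi zeta ot st oprev bt (fst p) * pilo ac st ot (fst (snd p))) \<and> 0 \<le> B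
        \<and> (\<forall>x\<in>Theta. \<bar>pib bt st oprev (snd (snd x)) * pibar_hi pihi zeta ot st oprev bt (fst x) * pilo ac st ot (fst (snd x))\<bar> \<le> B)"
      by (rule lipb_mult[OF _ f3])
    then show "\<exists>L. L-lipschitz_on Theta (\<lambda>p. hfun pihi pilo pib zeta p oprev st ac ot bt)"
      unfolding hfun_def by blast
  qed
  then obtain Lf where Lf: "\<forall>oprev st ac ot bt. (Lf oprev st ac ot bt)-lipschitz_on Theta (\<lambda>p. hfun pihi pilo pib zeta p oprev st ac ot bt)"
    by metis
  define L where "L = (\<Sum>x\<in>(UNIV::('o \<times> 's \<times> 'a \<times> 'o \<times> bool) set). case x of (o1, s1, a1, o2, b1) \<Rightarrow> Lf o1 s1 a1 o2 b1)"
  have "L-lipschitz_on Theta (\<lambda>p. hfun pihi pilo pib zeta p oprev st ac ot bt)" for oprev st ac ot bt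
  proof (rule lipschitz_on_mono[OF Lf[rule_format, of oprev st ac ot bt] order_refl])
    have nn: "0 \<le> (case x of (o1, s1, a1, o2, b1) \<Rightarrow> Lf o1 s1 a1 o2 b1)" for x :: "'o \<times> 's \<times> 'a \<times> 'o \<times> bool"
      using lipschitz_on_nonneg[OF Lf[rule_format]] by (simp split: prod.splits)
    have "(case (oprev, st, ac, ot, bt) of (o1, s1, a1, o2, b1) \<Rightarrow> Lf o1 s1 a1 o2 b1) \<le> L"
      unfolding L_def by (rule member_le_sum) (use nn in auto)
    then show "Lf oprev st ac ot bt \<le> L" by simp
  qed
  then show ?thesis by blast
qed

lemma Lconst_bound:
  fixes pihi :: "'o::finite \<Rightarrow> 's::finite \<Rightarrow> 'h::euclidean_space \<Rightarrow> real"
    and pilo :: "'a::finite \<Rightarrow> 's \<Rightarrow> 'o \<Rightarrow> 'l::euclidean_space \<Rightarrow> real"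
    and pib :: "bool \<Rightarrow> 's \<Rightarrow> 'o \<Rightarrow> 'b::euclidean_space \<Rightarrow> real"
    and Theta :: "('h,'l,'b) param set"
  assumes L: "\<exists>L. \<forall>oprev st ac ot bt. L-lipschitz_on Theta (\<lambda>p. hfun pihi pilo pib zeta p oprev st ac ot bt)"
    and th: "th \<in> Theta" and th': "th' \<in> Theta"
  shows "0 \<le> Lconst pihi pilo pib zeta Theta th (norm (th' - th))
    \<and> (\<forall>oprev st ac ot bt. \<bar>hfun pihi pilo pib zeta th' oprev st ac ot bt - hfun pihi pilo pib zeta th oprev st ac ot bt\<bar>
        \<le> Lconst pihi pilo pib zeta Theta th (norm (th' - th)) * norm (th' - th))"
proof -
  define S where "S = {t\<in>Theta. norm (t - th) \<le> norm (th' - th)}"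
  define Ls where "Ls = {L. \<forall>oprev st ac ot bt. L-lipschitz_on S (\<lambda>p. hfun pihi pilo pib zeta p oprev st ac ot bt)}"
  have Lc: "Lconst pihi pilo pib zeta Theta th (norm (th' - th)) = Inf Ls"
    unfolding Lconst_def Ls_def S_def by simp
  obtain L0 where L0: "\<forall>oprev st ac ot bt. L0-lipschitz_on Theta (\<lambda>p. hfun pihi pilo pib zeta p oprev st ac ot bt)"
    using L by blast
  have "S \<subseteq> Theta" unfolding S_def by blast
  then have "L0 \<in> Ls" unfolding Ls_def using L0 lipschitz_on_subset by blast
  then have ne: "Ls \<noteq> {}" by blast
  have nn: "0 \<le> L" if "L \<in> Ls" for L
  proof -
    have "L-lipschitz_on S (\<lambda>p. hfun pihi pilo pib zeta p undefined undefined undefined undefined undefined)"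
      using that unfolding Ls_def by blast
    then show ?thesis by (rule lipschitz_on_nonneg)
  qed
  have I0: "0 \<le> Inf Ls" using ne nn by (intro cInf_greatest) auto
  have thS: "th \<in> S" "th' \<in> S" unfolding S_def using th th' by auto
  have B: "\<bar>hfun pihi pilo pib zeta th' oprev st ac ot bt - hfun pihi pilo pib zeta th oprev st ac ot bt\<bar>
        \<le> Inf Ls * norm (th' - th)" for oprev st ac ot bt
  proof (cases "th' = th")
    case True then show ?thesis by simp
  next
    case False
    then have dp: "0 < norm (th' - th)" by simp
    have "\<bar>hfun pihi pilo pib zeta th' oprev st ac ot bt - hfun pihi pilo pib zeta th oprev st ac ot bt\<bar> / norm (th' - th) \<le> Inf Ls"
    proof (rule cInf_greatest[OF ne])
      fix L assume "L \<in> Ls"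
      then have "L-lipschitz_on S (\<lambda>p. hfun pihi pilo pib zeta p oprev st ac ot bt)" unfolding Ls_def by blast
      from lipschitz_onD[OF this thS(2) thS(1)]
      have "\<bar>hfun pihi pilo pib zeta th' oprev st ac ot bt - hfun pihi pilo pib zeta th oprev st ac ot bt\<bar> \<le> L * norm (th' - th)"
        by (simp add: dist_real_def dist_norm)
      then show "\<bar>hfun pihi pilo pib zeta th' oprev st ac ot bt - hfun pihi pilo pib zeta th oprev st ac ot bt\<bar> / norm (th' - th) \<le> L"
        using dp by (simp add: divide_le_eq)
    qed
    then show ?thesis using dp by (simp add: divide_le_eq)
  qed
  show ?thesis unfolding Lc using I0 B by blast
qed

lemma hmin_le: "hmin pihi pilo pib zeta th st ac \<le> hfun pihi pilo pib zeta th oprev st ac ot (bt::bool)"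
  for pihi :: "'o::finite \<Rightarrow> 's \<Rightarrow> 'h \<Rightarrow> real"
  unfolding hmin_def
  apply (rule Min_le)
   apply simp
  apply (rule image_eqI[where x="(oprev,ot,bt)"])
   apply auto
  done

lemma hmax_ge: "hfun pihi pilo pib zeta th oprev st ac ot (bt::bool) \<le> hmax pihi pilo pib zeta th st ac"
  for pihi :: "'o::finite \<Rightarrow> 's \<Rightarrow> 'h \<Rightarrow> real"
  unfolding hmax_def
  apply (rule Max_ge)
   apply simp
  apply (rule image_eqI[where x="(oprev,ot,bt)"])
   apply auto
  done

lemma hmin_pos:
  fixes pihi :: "'o::finite \<Rightarrow> 's \<Rightarrow> 'h \<Rightarrow> real"
  assumes "\<forall>oprev ot bt. 0 < hfun pihi pilo pib zeta th oprev st ac ot bt"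
  shows "0 < hmin pihi pilo pib zeta th st ac"
proof -
  let ?A = "range (\<lambda>(oprev, ot, bt). hfun pihi pilo pib zeta th oprev st ac ot bt)"
  have "Min ?A \<in> ?A" by (rule Min_in) auto
  then show ?thesis unfolding hmin_def using assms by auto
qed

lemma z_ge:
  fixes pihi :: "'o::finite \<Rightarrow> 's::finite \<Rightarrow> 'h \<Rightarrow> real" and pilo :: "'a::finite \<Rightarrow> 's \<Rightarrow> 'o \<Rightarrow> 'l \<Rightarrow> real"
  shows "max (hmax pihi pilo pib zeta th st ac) (hmax pihi pilo pib zeta th' st ac)
       / (hmin pihi pilo pib zeta th st ac * hmin pihi pilo pib zeta th' st ac) \<le> zconst pihi pilo pib zeta th th'"
  unfolding zconst_def
  apply (rule Max_ge)
   apply simp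
  apply (rule image_eqI[where x="(st,ac)"])
   apply auto
  done

lemma fwd_eq:
  "fwd pihi pilo pib zeta s a th t phi
   = nxt (\<lambda>y x. hfun pihi pilo pib zeta th (fst y) (s t) (a t) (fst x) (snd x)) phi"
  unfolding fwd_def nxt_def
  by (rule arg_cong[where f=normalize]) (auto simp: split_beta mult.commute intro!: ext sum.cong)

lemma bwd_eq:
  "bwd pihi pilo pib zeta s a th t rho
   = nxt (\<lambda>x y. hfun pihi pilo pib zeta th (fst y) (s (t+1)) (a (t+1)) (fst x) (snd x)) rho"
  unfolding bwd_def nxt_def
  by (rule arg_cong[where f=normalize]) (auto simp: split_beta mult.commute intro!: ext sum.cong)

lemma pert_bound:
  fixes a a' K m z :: real
  assumes "\<bar>a' - a\<bar> \<le> K" "0 \<le> K" "0 < m" "m \<le> a" "1/m \<le> z"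
  shows "\<bar>a' - a\<bar> \<le> (z*K) * a"
proof -
  have zm: "1 \<le> z * m" using assms(3,5) by (simp add: divide_le_eq mult.commute)
  have z0: "0 \<le> z" using assms(3,5) by (smt (verit) divide_pos_pos)
  have "K = K * 1" by simp
  also have "\<dots> \<le> K * (z * m)" using zm assms(2) by (intro mult_left_mono) auto
  also have "\<dots> \<le> K * (z * a)" using assms(2,4) z0 by (intro mult_left_mono) auto
  finally show ?thesis using assms(1) by (simp add: algebra_simps)
qed

lemma otimes_comm: "otimes f g = otimes g f"
  unfolding otimes_def by (simp add: mult.commute)

theorem lemma11:
  fixes pihi :: "'o::finite \<Rightarrow> 's::finite \<Rightarrow> 'h::euclidean_space \<Rightarrow> real"
    and pilo :: "'a::finite \<Rightarrow> 's \<Rightarrow> 'o \<Rightarrow> 'l::euclidean_space \<Rightarrow> real"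
    and pib :: "bool \<Rightarrow> 's \<Rightarrow> 'o \<Rightarrow> 'b::euclidean_space \<Rightarrow> real"
    and Theta_hi :: "'h set" and Theta_lo :: "'l set" and Theta_b :: "'b set"
    and Theta :: "('h,'l,'b) param set"
    and zeta eps_b :: real
    and s :: "int \<Rightarrow> 's" and a :: "int \<Rightarrow> 'a"
    and t1 t2 :: int
    and th th' :: "('h,'l,'b) param"
    and phi phi' rho rho' :: "int \<Rightarrow> ('o \<times> bool \<Rightarrow> real)"
  assumes Theta_def: "Theta = Theta_hi \<times> Theta_lo \<times> Theta_b"
    and Theta_convex: "convex Theta" and Theta_compact: "compact Theta"
    and standing: "\<exists>T. open T \<and> Theta \<subseteq> T \<and>
        (\<forall>p\<in>T. (\<forall>ov st. 0 < pihi ov st (fst p)) \<and> (\<forall>st. (\<Sum>ov\<in>UNIV. pihi ov st (fst p)) = 1)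
             \<and> (\<forall>ac st ov. 0 < pilo ac st ov (fst (snd p)))
             \<and> (\<forall>st ov. (\<Sum>ac\<in>UNIV. pilo ac st ov (fst (snd p))) = 1)
             \<and> (\<forall>bt st ov. 0 < pib bt st ov (snd (snd p)))
             \<and> (\<forall>st ov. pib True st ov (snd (snd p)) + pib False st ov (snd (snd p)) = 1))
        \<and> (\<forall>ov st. C1_on T (\<lambda>p. pihi ov st (fst p)))
        \<and> (\<forall>ac st ov. C1_on T (\<lambda>p. pilo ac st ov (fst (snd p))))
        \<and> (\<forall>bt st ov. C1_on T (\<lambda>p. pib bt st ov (snd (snd p))))"
    and zeta: "0 < zeta" "zeta < 1"
    and eps_pos: "0 < eps_b"
    and eps_b: "\<exists>pibar :: 'o \<times> bool \<Rightarrow> 's \<Rightarrow> ('h,'l,'b) param \<Rightarrow> real.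
        (\<forall>p\<in>Theta. \<forall>st. is_prob (\<lambda>x. pibar x st p)) \<and>
        (\<forall>p\<in>Theta. \<forall>oprev st ot bt.
           0 < eps_b * zeta * pibar (ot, bt) st p \<and>
           eps_b * zeta * pibar (ot, bt) st p
             \<le> pib bt st oprev (snd (snd p)) * pibar_hi pihi zeta ot st oprev bt (fst p) \<and>
           pib bt st oprev (snd (snd p)) * pibar_hi pihi zeta ot st oprev bt (fst p)
             \<le> inverse eps_b * real CARD('o) * pibar (ot, bt) st p)"
    and t12: "t1 \<le> t2"
    and th_in: "th \<in> Theta" and th'_in: "th' \<in> Theta"
    and phi_pos: "\<forall>t\<in>{t1..t2}. pos_prob (phi t)"
    and phi'_pos: "\<forall>t\<in>{t1..t2}. pos_prob (phi' t)"
    and rho_pos: "\<forall>t\<in>{t1..t2}. pos_prob (rho t)"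
    and rho'_pos: "\<forall>t\<in>{t1..t2}. pos_prob (rho' t)"
    and phi_fwd: "\<forall>t\<in>{t1<..t2}. fwd pihi pilo pib zeta s a th t (phi (t - 1)) = phi t"
    and phi'_fwd: "\<forall>t\<in>{t1<..t2}. fwd pihi pilo pib zeta s a th' t (phi' (t - 1)) = phi' t"
    and rho_bwd: "\<forall>t\<in>{t1..<t2}. bwd pihi pilo pib zeta s a th t (rho (t + 1)) = rho t"
    and rho'_bwd: "\<forall>t\<in>{t1..<t2}. bwd pihi pilo pib zeta s a th' t (rho' (t + 1)) = rho' t"
  shows "tv_dist (otimes (phi t2) (rho t2)) (otimes (phi' t2) (rho t2))
           \<le> (1 - eps_b\<^sup>2 * zeta / real CARD('o)) ^ nat (t2 - t1)
             + real CARD('o) * zconst pihi pilo pib zeta th th'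
                 * Lconst pihi pilo pib zeta Theta th (norm (th' - th))
                 / (eps_b\<^sup>2 * zeta) * norm (th' - th)
       \<and> tv_dist (otimes (phi' t1) (rho t1)) (otimes (phi' t1) (rho' t1))
           \<le> (1 - eps_b\<^sup>2 * zeta / real CARD('o)) ^ nat (t2 - t1)
             + real CARD('o) * zconst pihi pilo pib zeta th th'
                 * Lconst pihi pilo pib zeta Theta th (norm (th' - th))
                 / (eps_b\<^sup>2 * zeta) * norm (th' - th)"
proof -
  from standing obtain T where Topen: "open T" and TT: "Theta \<subseteq> T"
    and P: "\<forall>p\<in>T. (\<forall>ov st. 0 < pihi ov st (fst p)) \<and> (\<forall>st. (\<Sum>ov\<in>UNIV. pihi ov st (fst p)) = 1)
             \<and> (\<forall>ac st ov. 0 < pilo ac st ov (fst (snd p)))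
             \<and> (\<forall>st ov. (\<Sum>ac\<in>UNIV. pilo ac st ov (fst (snd p))) = 1)
             \<and> (\<forall>bt st ov. 0 < pib bt st ov (snd (snd p)))
             \<and> (\<forall>st ov. pib True st ov (snd (snd p)) + pib False st ov (snd (snd p)) = 1)"
    and C1h: "\<forall>ov st. C1_on T (\<lambda>p. pihi ov st (fst p))"
    and C1l: "\<forall>ac st ov. C1_on T (\<lambda>p. pilo ac st ov (fst (snd p)))"
    and C1b: "\<forall>bt st ov. C1_on T (\<lambda>p. pib bt st ov (snd (snd p)))"
    by (elim exE conjE) (rule that, assumption+)
  have plo: "0 < pilo ac st ov (fst (snd p))" if "p \<in> Theta" for p ac st ov
    using P TT that by blast
  from eps_b obtain pibar :: "'o \<times> bool \<Rightarrow> 's \<Rightarrow> ('h,'l,'b) param \<Rightarrow> real"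
    where pb2: "\<forall>p\<in>Theta. \<forall>oprev st ot bt.
           0 < eps_b * zeta * pibar (ot, bt) st p \<and>
           eps_b * zeta * pibar (ot, bt) st p
             \<le> pib bt st oprev (snd (snd p)) * pibar_hi pihi zeta ot st oprev bt (fst p) \<and>
           pib bt st oprev (snd (snd p)) * pibar_hi pihi zeta ot st oprev bt (fst p)
             \<le> inverse eps_b * real CARD('o) * pibar (ot, bt) st p"
    by blast
  define c1 where "c1 = eps_b * zeta"
  define c2 where "c2 = inverse eps_b * real CARD('o)"
  have c1: "0 < c1" unfolding c1_def using eps_pos zeta by simp
  have pbpos: "0 < pibar x st p" if "p \<in> Theta" for x st p
  proof -
    obtain ot bt where x: "x = (ot, bt)" by (cases x)
    have "0 < c1 * pibar x st p" using pb2 that x unfolding c1_def by blast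
    then show ?thesis using c1 by (simp add: zero_less_mult_iff)
  qed
  have DB: "c1 * (pibar x st p * pilo ac st (fst x) (fst (snd p))) \<le> hfun pihi pilo pib zeta p oprev st ac (fst x) (snd x)
       \<and> hfun pihi pilo pib zeta p oprev st ac (fst x) (snd x) \<le> c2 * (pibar x st p * pilo ac st (fst x) (fst (snd p)))"
    if p: "p \<in> Theta" for p oprev st ac x
  proof -
    obtain ot bt where x: "x = (ot, bt)" by (cases x)
    define A where "A = pib bt st oprev (snd (snd p)) * pibar_hi pihi zeta ot st oprev bt (fst p)"
    define pl where "pl = pilo ac st ot (fst (snd p))"
    have pl: "0 < pl" unfolding pl_def using plo[OF p] by blast
    have A1: "c1 * pibar x st p \<le> A" and A2: "A \<le> c2 * pibar x st p"
      using pb2 p x unfolding A_def c1_def c2_def by blast+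
    have h: "hfun pihi pilo pib zeta p oprev st ac (fst x) (snd x) = A * pl"
      unfolding hfun_def A_def pl_def x by simp
    have "c1 * (pibar x st p * pl) \<le> A * pl" using A1 pl by (simp add: mult.assoc[symmetric] mult_right_mono)
    moreover have "A * pl \<le> c2 * (pibar x st p * pl)" using A2 pl by (simp add: mult.assoc[symmetric] mult_right_mono)
    ultimately show ?thesis using h x unfolding pl_def by simp
  qed
  have hpos: "0 < hfun pihi pilo pib zeta p oprev st ac ot bt" if p: "p \<in> Theta" for p oprev st ac ot bt
  proof -
    have "0 < c1 * (pibar (ot,bt) st p * pilo ac st ot (fst (snd p)))"
      using c1 pbpos[OF p] plo[OF p] by simp
    also have "\<dots> \<le> hfun pihi pilo pib zeta p oprev st ac ot bt" using DB[OF p, where x="(ot,bt)" and oprev=oprev and st=st and ac=ac] by simp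
    finally show ?thesis .
  qed
  have c12: "c1 \<le> c2"
  proof -
    define x :: "'o \<times> bool" where "x = undefined"
    define st :: 's where "st = undefined"
    define ac :: 'a where "ac = undefined"
    define q where "q = pibar x st th * pilo ac st (fst x) (fst (snd th))"
    have q: "0 < q" unfolding q_def using pbpos[OF th_in] plo[OF th_in] by simp
    have "c1 * q \<le> c2 * q" using DB[OF th_in, where oprev=undefined and st=st and ac=ac and x=x] unfolding q_def by linarith
    then show ?thesis using q by simp
  qed
  have hl: "\<exists>L. \<forall>oprev st ac ot bt. L-lipschitz_on Theta (\<lambda>p. hfun pihi pilo pib zeta p oprev st ac ot bt)"
    by (rule h_lip[OF TT Theta_compact Theta_convex C1h C1l C1b])
  define Lc where "Lc = Lconst pihi pilo pib zeta Theta th (norm (th' - th))"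
  define z where "z = zconst pihi pilo pib zeta th th'"
  define Dl where "Dl = norm (th' - th)"
  have LB: "0 \<le> Lc" "\<forall>oprev st ac ot bt. \<bar>hfun pihi pilo pib zeta th' oprev st ac ot bt - hfun pihi pilo pib zeta th oprev st ac ot bt\<bar> \<le> Lc * Dl"
    using Lconst_bound[OF hl th_in th'_in] unfolding Lc_def Dl_def by blast+
  have hmp: "0 < hmin pihi pilo pib zeta p st ac" if "p \<in> Theta" for p st ac
    using hpos[OF that] by (intro hmin_pos) blast
  have zinv: "1 / hmin pihi pilo pib zeta th st ac \<le> z" for st ac
  proof -
    let ?m = "hmin pihi pilo pib zeta th st ac" and ?m' = "hmin pihi pilo pib zeta th' st ac"
    let ?M' = "hmax pihi pilo pib zeta th' st ac" and ?M = "hmax pihi pilo pib zeta th st ac"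
    have m: "0 < ?m" "0 < ?m'" using hmp th_in th'_in by auto
    have "?m' \<le> ?M'" using hmin_le[of pihi pilo pib zeta th' st ac undefined undefined undefined]
        hmax_ge[of pihi pilo pib zeta th' undefined st ac undefined undefined] by linarith
    then have "?m' \<le> max ?M ?M'" by simp
    then have "?m' / (?m * ?m') \<le> max ?M ?M' / (?m * ?m')" using m by (intro divide_right_mono) auto
    moreover have "?m' / (?m * ?m') = 1 / ?m" using m by simp
    moreover have "max ?M ?M' / (?m * ?m') \<le> z" unfolding z_def by (rule z_ge)
    ultimately show ?thesis by linarith
  qed
  have z0: "0 \<le> z"
  proof -
    have "0 < 1 / hmin pihi pilo pib zeta th undefined undefined" using hmp[OF th_in] by simp
    then show ?thesis using zinv[of undefined undefined] by linarith
  qed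
  define r where "r = z * (Lc * Dl)"
  have r0: "0 \<le> r" unfolding r_def Dl_def using z0 LB(1) by simp
  have pert: "\<bar>hfun pihi pilo pib zeta th' oprev st ac ot bt - hfun pihi pilo pib zeta th oprev st ac ot bt\<bar>
      \<le> r * hfun pihi pilo pib zeta th oprev st ac ot bt" for oprev st ac ot bt
    unfolding r_def
  proof (rule pert_bound)
    show "\<bar>hfun pihi pilo pib zeta th' oprev st ac ot bt - hfun pihi pilo pib zeta th oprev st ac ot bt\<bar> \<le> Lc * Dl"
      using LB(2) by blast
    show "0 \<le> Lc * Dl" unfolding Dl_def using LB(1) by simp
    show "0 < hmin pihi pilo pib zeta th st ac" by (rule hmp[OF th_in])
    show "hmin pihi pilo pib zeta th st ac \<le> hfun pihi pilo pib zeta th oprev st ac ot bt" by (rule hmin_le)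
    show "1 / hmin pihi pilo pib zeta th st ac \<le> z" by (rule zinv)
  qed
  define N where "N = nat (t2 - t1)"
  have intN: "int N = t2 - t1" unfolding N_def using t12 by simp
  have fin: "(1 - c1/c2)^N + r * (c2/c1)
     = (1 - eps_b\<^sup>2 * zeta / real CARD('o)) ^ nat (t2 - t1)
             + real CARD('o) * zconst pihi pilo pib zeta th th'
                 * Lconst pihi pilo pib zeta Theta th (norm (th' - th))
                 / (eps_b\<^sup>2 * zeta) * norm (th' - th)"
  proof -
    have e1: "c1/c2 = eps_b\<^sup>2 * zeta / real CARD('o)"
      unfolding c1_def c2_def using eps_pos by (simp add: field_simps power2_eq_square)
    have e2: "r * (c2/c1) = real CARD('o) * z * Lc / (eps_b\<^sup>2 * zeta) * Dl"
      unfolding c1_def c2_def r_def using eps_pos zeta by (simp add: field_simps power2_eq_square)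
    show ?thesis unfolding e1 e2 N_def z_def Lc_def Dl_def ..
  qed
  have F: "tv_dist (otimes ((\<lambda>j. phi (t1 + int j)) N) (rho t2)) (otimes ((\<lambda>j. phi' (t1 + int j)) N) (rho t2))
      \<le> (1 - c1/c2)^N + r * (c2/c1)"
  proof (rule chain_final[where Q="\<lambda>j y x. hfun pihi pilo pib zeta th (fst y) (s (t1 + int j)) (a (t1 + int j)) (fst x) (snd x)"
        and Q'="\<lambda>j y x. hfun pihi pilo pib zeta th' (fst y) (s (t1 + int j)) (a (t1 + int j)) (fst x) (snd x)"
        and u="\<lambda>j y. 1"
        and v="\<lambda>j x. pibar x (s (t1 + int j)) th * pilo (a (t1 + int j)) (s (t1 + int j)) (fst x) (fst (snd th))"])
    show "\<forall>j\<le>N. \<forall>x. 0 < phi (t1 + int j) x"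
    proof (intro allI impI)
      fix j x assume "j \<le> N"
      then have "t1 + int j \<in> {t1..t2}" using intN by simp
      then show "0 < phi (t1 + int j) x" using phi_pos unfolding pos_prob_def by blast
    qed
    show "\<forall>j\<le>N. \<forall>x. 0 < phi' (t1 + int j) x"
    proof (intro allI impI)
      fix j x assume "j \<le> N"
      then have "t1 + int j \<in> {t1..t2}" using intN by simp
      then show "0 < phi' (t1 + int j) x" using phi'_pos unfolding pos_prob_def by blast
    qed
    show "\<forall>j. 1 \<le> j \<and> j \<le> N \<longrightarrow> phi (t1 + int j) = nxt (\<lambda>y x. hfun pihi pilo pib zeta th (fst y) (s (t1 + int j)) (a (t1 + int j)) (fst x) (snd x)) (phi (t1 + int (j - 1)))"
    proof (intro allI impI)
      fix j :: nat assume j: "1 \<le> j \<and> j \<le> N"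
      then have tin: "t1 + int j \<in> {t1<..t2}" using intN by simp
      have e: "t1 + int j - 1 = t1 + int (j - 1)" using j by simp
      show "phi (t1 + int j) = nxt (\<lambda>y x. hfun pihi pilo pib zeta th (fst y) (s (t1 + int j)) (a (t1 + int j)) (fst x) (snd x)) (phi (t1 + int (j - 1)))"
      proof -
        have "fwd pihi pilo pib zeta s a th (t1 + int j) (phi (t1 + int j - 1)) = phi (t1 + int j)"
          using phi_fwd tin by blast
        then show ?thesis unfolding fwd_eq e by (rule sym)
      qed
    qed
    show "\<forall>j. 1 \<le> j \<and> j \<le> N \<longrightarrow> phi' (t1 + int j) = nxt (\<lambda>y x. hfun pihi pilo pib zeta th' (fst y) (s (t1 + int j)) (a (t1 + int j)) (fst x) (snd x)) (phi' (t1 + int (j - 1)))"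
    proof (intro allI impI)
      fix j :: nat assume j: "1 \<le> j \<and> j \<le> N"
      then have tin: "t1 + int j \<in> {t1<..t2}" using intN by simp
      have e: "t1 + int j - 1 = t1 + int (j - 1)" using j by simp
      show "phi' (t1 + int j) = nxt (\<lambda>y x. hfun pihi pilo pib zeta th' (fst y) (s (t1 + int j)) (a (t1 + int j)) (fst x) (snd x)) (phi' (t1 + int (j - 1)))"
      proof -
        have "fwd pihi pilo pib zeta s a th' (t1 + int j) (phi' (t1 + int j - 1)) = phi' (t1 + int j)"
          using phi'_fwd tin by blast
        then show ?thesis unfolding fwd_eq e by (rule sym)
      qed
    qed
    show "0 < c1" by (rule c1)
    show "c1 \<le> c2" by (rule c12)
    show "0 \<le> r" by (rule r0)
    show "\<forall>x. 0 < rho t2 x" using rho_pos t12 unfolding pos_prob_def by auto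
    show "\<forall>j. 1 \<le> j \<and> j \<le> N \<longrightarrow> (\<forall>x. 0 < (1::real)) \<and>
        (\<forall>x. 0 < pibar x (s (t1 + int j)) th * pilo (a (t1 + int j)) (s (t1 + int j)) (fst x) (fst (snd th))) \<and>
        (\<forall>y x. c1 * 1 * (pibar x (s (t1 + int j)) th * pilo (a (t1 + int j)) (s (t1 + int j)) (fst x) (fst (snd th)))
           \<le> hfun pihi pilo pib zeta th (fst y) (s (t1 + int j)) (a (t1 + int j)) (fst x) (snd x)) \<and>
        (\<forall>y x. hfun pihi pilo pib zeta th (fst y) (s (t1 + int j)) (a (t1 + int j)) (fst x) (snd x)
           \<le> c2 * 1 * (pibar x (s (t1 + int j)) th * pilo (a (t1 + int j)) (s (t1 + int j)) (fst x) (fst (snd th)))) \<and>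
        (\<forall>y x. 0 < hfun pihi pilo pib zeta th' (fst y) (s (t1 + int j)) (a (t1 + int j)) (fst x) (snd x)) \<and>
        (\<forall>y x. \<bar>hfun pihi pilo pib zeta th' (fst y) (s (t1 + int j)) (a (t1 + int j)) (fst x) (snd x)
              - hfun pihi pilo pib zeta th (fst y) (s (t1 + int j)) (a (t1 + int j)) (fst x) (snd x)\<bar>
           \<le> r * hfun pihi pilo pib zeta th (fst y) (s (t1 + int j)) (a (t1 + int j)) (fst x) (snd x))"
      using DB[OF th_in] pbpos[OF th_in] plo[OF th_in] hpos[OF th'_in] pert by simp
  qed
  have B: "tv_dist (otimes ((\<lambda>j. rho (t2 - int j)) N) (phi' t1)) (otimes ((\<lambda>j. rho' (t2 - int j)) N) (phi' t1))
      \<le> (1 - c1/c2)^N + r * (c2/c1)"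
  proof (rule chain_final[where Q="\<lambda>j x y. hfun pihi pilo pib zeta th (fst y) (s (t2 - int j + 1)) (a (t2 - int j + 1)) (fst x) (snd x)"
        and Q'="\<lambda>j x y. hfun pihi pilo pib zeta th' (fst y) (s (t2 - int j + 1)) (a (t2 - int j + 1)) (fst x) (snd x)"
        and v="\<lambda>j y. 1"
        and u="\<lambda>j x. pibar x (s (t2 - int j + 1)) th * pilo (a (t2 - int j + 1)) (s (t2 - int j + 1)) (fst x) (fst (snd th))"])
    show "\<forall>j\<le>N. \<forall>x. 0 < rho (t2 - int j) x"
    proof (intro allI impI)
      fix j x assume "j \<le> N"
      then have "t2 - int j \<in> {t1..t2}" using intN by simp
      then show "0 < rho (t2 - int j) x" using rho_pos unfolding pos_prob_def by blast
    qed
    show "\<forall>j\<le>N. \<forall>x. 0 < rho' (t2 - int j) x"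
    proof (intro allI impI)
      fix j x assume "j \<le> N"
      then have "t2 - int j \<in> {t1..t2}" using intN by simp
      then show "0 < rho' (t2 - int j) x" using rho'_pos unfolding pos_prob_def by blast
    qed
    show "\<forall>j. 1 \<le> j \<and> j \<le> N \<longrightarrow> rho (t2 - int j) = nxt (\<lambda>x y. hfun pihi pilo pib zeta th (fst y) (s (t2 - int j + 1)) (a (t2 - int j + 1)) (fst x) (snd x)) (rho (t2 - int (j - 1)))"
    proof (intro allI impI)
      fix j :: nat assume j: "1 \<le> j \<and> j \<le> N"
      then have tin: "t2 - int j \<in> {t1..<t2}" using intN by simp
      have e: "t2 - int j + 1 = t2 - int (j - 1)" using j by simp
      show "rho (t2 - int j) = nxt (\<lambda>x y. hfun pihi pilo pib zeta th (fst y) (s (t2 - int j + 1)) (a (t2 - int j + 1)) (fst x) (snd x)) (rho (t2 - int (j - 1)))"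
      proof -
        have "bwd pihi pilo pib zeta s a th (t2 - int j) (rho (t2 - int j + 1)) = rho (t2 - int j)"
          using rho_bwd tin by blast
        then show ?thesis unfolding bwd_eq e by (rule sym)
      qed
    qed
    show "\<forall>j. 1 \<le> j \<and> j \<le> N \<longrightarrow> rho' (t2 - int j) = nxt (\<lambda>x y. hfun pihi pilo pib zeta th' (fst y) (s (t2 - int j + 1)) (a (t2 - int j + 1)) (fst x) (snd x)) (rho' (t2 - int (j - 1)))"
    proof (intro allI impI)
      fix j :: nat assume j: "1 \<le> j \<and> j \<le> N"
      then have tin: "t2 - int j \<in> {t1..<t2}" using intN by simp
      have e: "t2 - int j + 1 = t2 - int (j - 1)" using j by simp
      show "rho' (t2 - int j) = nxt (\<lambda>x y. hfun pihi pilo pib zeta th' (fst y) (s (t2 - int j + 1)) (a (t2 - int j + 1)) (fst x) (snd x)) (rho' (t2 - int (j - 1)))"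
      proof -
        have "bwd pihi pilo pib zeta s a th' (t2 - int j) (rho' (t2 - int j + 1)) = rho' (t2 - int j)"
          using rho'_bwd tin by blast
        then show ?thesis unfolding bwd_eq e by (rule sym)
      qed
    qed
    show "0 < c1" by (rule c1)
    show "c1 \<le> c2" by (rule c12)
    show "0 \<le> r" by (rule r0)
    show "\<forall>x. 0 < phi' t1 x" using phi'_pos t12 unfolding pos_prob_def by auto
    show "\<forall>j. 1 \<le> j \<and> j \<le> N \<longrightarrow>
        (\<forall>x. 0 < pibar x (s (t2 - int j + 1)) th * pilo (a (t2 - int j + 1)) (s (t2 - int j + 1)) (fst x) (fst (snd th))) \<and>
        (\<forall>x. 0 < (1::real)) \<and>
        (\<forall>x y. c1 * (pibar x (s (t2 - int j + 1)) th * pilo (a (t2 - int j + 1)) (s (t2 - int j + 1)) (fst x) (fst (snd th))) * 1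
           \<le> hfun pihi pilo pib zeta th (fst y) (s (t2 - int j + 1)) (a (t2 - int j + 1)) (fst x) (snd x)) \<and>
        (\<forall>x y. hfun pihi pilo pib zeta th (fst y) (s (t2 - int j + 1)) (a (t2 - int j + 1)) (fst x) (snd x)
           \<le> c2 * (pibar x (s (t2 - int j + 1)) th * pilo (a (t2 - int j + 1)) (s (t2 - int j + 1)) (fst x) (fst (snd th))) * 1) \<and>
        (\<forall>x y. 0 < hfun pihi pilo pib zeta th' (fst y) (s (t2 - int j + 1)) (a (t2 - int j + 1)) (fst x) (snd x)) \<and>
        (\<forall>x y. \<bar>hfun pihi pilo pib zeta th' (fst y) (s (t2 - int j + 1)) (a (t2 - int j + 1)) (fst x) (snd x)
              - hfun pihi pilo pib zeta th (fst y) (s (t2 - int j + 1)) (a (t2 - int j + 1)) (fst x) (snd x)\<bar>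
           \<le> r * hfun pihi pilo pib zeta th (fst y) (s (t2 - int j + 1)) (a (t2 - int j + 1)) (fst x) (snd x))"
      using DB[OF th_in] pbpos[OF th_in] plo[OF th_in] hpos[OF th'_in] pert by simp
  qed
  have e1: "t1 + int N = t2" "t2 - int N = t1" using intN by simp_all
  show ?thesis
    using F B unfolding e1 fin otimes_comm[of "phi' t1"] by simp
qed

end
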